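(* Consider the ride-hailing model in the context and a demand vector $\bm b^C$ with $0\le b^C_i\le b_i$. The program $\mathcal{CV}(\bm b^C)$ may have multiple optimal solutions (multiple CV equilibria), but all optimal solutions $\bm x^C$: 1. yield the same platform profit $\pi(\bm b^C)=\sum_{i,\alpha}r^{C2P}_{i\alpha}x^C_{i\alpha}$; 2. have the same active mass $m^C_0=\sum_{i,\alpha}\tau^{dr}_{i\alpha}x^C_{i\alpha}$; 3. moreover $\pi(\bm b^C)$, as a function of the CV fleet mass $N$ (with $\bm b^C$ and all other parameters fixed), is non-decreasing in $N$; 4. every optimal solution $\bm x^C$ of $\mathcal{CV}(\bm b^C)$ is also an optimal solution of the problem: maximize $\sum_{i,\alpha}r^C_{i\alpha}x_{i\alpha}$ over $\bm x\ge0$ satisfying $\sum_j x_{ji}\le b^C_i$ for all $i$, flow balance, and $\sum_{i,\alpha}\tau^{dr}_{i\alpha}x_{i\alpha}\le m^C_0$.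
   Context: Model. There are $L$ regions $\{1,\dots,L\}$. For regions $i,j$, $b_{ij}\ge0$ is the customer rate from $i$ to $j$; $b_i=\sum_j b_{ij}$ (assumed $>0$), $q_{ij}=b_{ij}/b_i$. Travel times satisfy $t_{ij}>0$ for $i\ne j$, $t_{ii}=0$. Constants: $p>0$, $c\ge0$, $R\in(0,1)$, CV fleet mass $N>0$. For $i,\alpha$: $\tau^{dr}_{i\alpha}=t_{i\alpha}+\sum_j q_{\alpha j}t_{\alpha j}$, $r^C_{i\alpha}=p(1-R)\sum_j q_{\alpha j}t_{\alpha j}-c\tau^{dr}_{i\alpha}$, $r^{C2P}_{i\alpha}=pR\sum_j q_{\alpha j}t_{\alpha j}$. A matrix $\bm x\in\mathbb R^{L\times L}_{\ge0}$ satisfies flow balance if $\sum_j(\sum_k x_{kj})q_{ji}=\sum_\alpha x_{i\alpha}$ for all $i$. $\mathcal{CV}(\bm b^C)$: maximize $N\log\sum_{i,\alpha}r^C_{i\alpha}x_{i\alpha}-\sum_{i,\alpha}\tau^{dr}_{i\alpha}x_{i\alpha}$ over $\bm x\ge0$ satisfying flow balance and $\sum_j x_{ji}\le b^C_i$ for all $i$. *)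

theory Defs
  imports Complex_Main
begin

text \<open>Regions are the elements of a finite type 'r (so L = CARD('r) \<ge> 1).
  Matrices indexed by regions are functions 'r \<Rightarrow> 'r \<Rightarrow> real.\<close>

definition bsum :: "('r::finite \<Rightarrow> 'r \<Rightarrow> real) \<Rightarrow> 'r \<Rightarrow> real" where
  "bsum b i = (\<Sum>j\<in>UNIV. b i j)"

definition qm :: "('r::finite \<Rightarrow> 'r \<Rightarrow> real) \<Rightarrow> 'r \<Rightarrow> 'r \<Rightarrow> real" where
  "qm b i j = b i j / bsum b i"

definition avg_trip :: "('r::finite \<Rightarrow> 'r \<Rightarrow> real) \<Rightarrow> ('r \<Rightarrow> 'r \<Rightarrow> real) \<Rightarrow> 'r \<Rightarrow> real" where
  "avg_trip b t a = (\<Sum>j\<in>UNIV. qm b a j * t a j)"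

definition tau_dr :: "('r::finite \<Rightarrow> 'r \<Rightarrow> real) \<Rightarrow> ('r \<Rightarrow> 'r \<Rightarrow> real) \<Rightarrow> 'r \<Rightarrow> 'r \<Rightarrow> real" where
  "tau_dr b t i a = t i a + avg_trip b t a"

definition rC :: "real \<Rightarrow> real \<Rightarrow> real \<Rightarrow> ('r::finite \<Rightarrow> 'r \<Rightarrow> real) \<Rightarrow> ('r \<Rightarrow> 'r \<Rightarrow> real) \<Rightarrow> 'r \<Rightarrow> 'r \<Rightarrow> real" where
  "rC p R c b t i a = p * (1 - R) * avg_trip b t a - c * tau_dr b t i a"

definition rC2P :: "real \<Rightarrow> real \<Rightarrow> ('r::finite \<Rightarrow> 'r \<Rightarrow> real) \<Rightarrow> ('r \<Rightarrow> 'r \<Rightarrow> real) \<Rightarrow> 'r \<Rightarrow> 'r \<Rightarrow> real" where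
  "rC2P p R b t i a = p * R * avg_trip b t a"

definition flow_balance :: "('r::finite \<Rightarrow> 'r \<Rightarrow> real) \<Rightarrow> ('r \<Rightarrow> 'r \<Rightarrow> real) \<Rightarrow> bool" where
  "flow_balance b x \<longleftrightarrow>
     (\<forall>i. (\<Sum>j\<in>UNIV. (\<Sum>k\<in>UNIV. x k j) * qm b j i) = (\<Sum>a\<in>UNIV. x i a))"

definition cv_feasible :: "('r::finite \<Rightarrow> 'r \<Rightarrow> real) \<Rightarrow> ('r \<Rightarrow> real) \<Rightarrow> ('r \<Rightarrow> 'r \<Rightarrow> real) \<Rightarrow> bool" where
  "cv_feasible b bC x \<longleftrightarrow>
     (\<forall>i a. 0 \<le> x i a) \<and> flow_balance b x \<and> (\<forall>i. (\<Sum>j\<in>UNIV. x j i) \<le> bC i)"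

definition lin_val :: "('r::finite \<Rightarrow> 'r \<Rightarrow> real) \<Rightarrow> ('r \<Rightarrow> 'r \<Rightarrow> real) \<Rightarrow> real" where
  "lin_val w x = (\<Sum>i\<in>UNIV. \<Sum>a\<in>UNIV. w i a * x i a)"

definition cv_obj :: "real \<Rightarrow> real \<Rightarrow> real \<Rightarrow> real \<Rightarrow> ('r::finite \<Rightarrow> 'r \<Rightarrow> real) \<Rightarrow> ('r \<Rightarrow> 'r \<Rightarrow> real)
    \<Rightarrow> ('r \<Rightarrow> 'r \<Rightarrow> real) \<Rightarrow> real" where
  "cv_obj N p R c b t x = N * ln (lin_val (rC p R c b t) x) - lin_val (tau_dr b t) x"

text \<open>Optimal solution of CV(b^C): feasible, in the domain of the logarithm
  (positive CV revenue, i.e. finite objective value), and maximizing the objective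
  among all such points.\<close>
definition cv_optimal :: "real \<Rightarrow> real \<Rightarrow> real \<Rightarrow> real \<Rightarrow> ('r::finite \<Rightarrow> 'r \<Rightarrow> real) \<Rightarrow> ('r \<Rightarrow> 'r \<Rightarrow> real)
    \<Rightarrow> ('r \<Rightarrow> real) \<Rightarrow> ('r \<Rightarrow> 'r \<Rightarrow> real) \<Rightarrow> bool" where
  "cv_optimal N p R c b t bC x \<longleftrightarrow>
     cv_feasible b bC x \<and> 0 < lin_val (rC p R c b t) x \<and>
     (\<forall>y. cv_feasible b bC y \<and> 0 < lin_val (rC p R c b t) y \<longrightarrow>
          cv_obj N p R c b t y \<le> cv_obj N p R c b t x)"

definition lp_optimal :: "real \<Rightarrow> real \<Rightarrow> real \<Rightarrow> ('r::finite \<Rightarrow> 'r \<Rightarrow> real) \<Rightarrow> ('r \<Rightarrow> 'r \<Rightarrow> real)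
    \<Rightarrow> ('r \<Rightarrow> real) \<Rightarrow> real \<Rightarrow> ('r \<Rightarrow> 'r \<Rightarrow> real) \<Rightarrow> bool" where
  "lp_optimal p R c b t bC m0 x \<longleftrightarrow>
     cv_feasible b bC x \<and> lin_val (tau_dr b t) x \<le> m0 \<and>
     (\<forall>y. cv_feasible b bC y \<and> lin_val (tau_dr b t) y \<le> m0 \<longrightarrow>
          lin_val (rC p R c b t) y \<le> lin_val (rC p R c b t) x)"

end

theory Submission
  imports Defs
begin

lemma lin_val_comb:
  "lin_val w (\<lambda>i a. u * x i a + v * y i a) = u * lin_val w x + v * lin_val w y"
  unfolding lin_val_def
  by (simp add: algebra_simps sum.distrib sum_distrib_left)

lemma feasible_mid:
  assumes "cv_feasible b bC x" "cv_feasible b bC y"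
  shows "cv_feasible b bC (\<lambda>i a. (1/2) * x i a + (1/2) * y i a)"
proof -
  have fx: "flow_balance b x" and fy: "flow_balance b y"
    using assms unfolding cv_feasible_def by auto
  have "flow_balance b (\<lambda>i a. (1/2) * x i a + (1/2) * y i a)"
    unfolding flow_balance_def
  proof
    fix i
    have "(\<Sum>j\<in>UNIV. (\<Sum>k\<in>UNIV. (1/2) * x k j + (1/2) * y k j) * qm b j i)
        = (1/2) * (\<Sum>j\<in>UNIV. (\<Sum>k\<in>UNIV. x k j) * qm b j i)
          + (1/2) * (\<Sum>j\<in>UNIV. (\<Sum>k\<in>UNIV. y k j) * qm b j i)"
      by (simp add: algebra_simps sum.distrib sum_distrib_left sum_distrib_right)
    also have "\<dots> = (1/2) * (\<Sum>a\<in>UNIV. x i a) + (1/2) * (\<Sum>a\<in>UNIV. y i a)"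
      using fx fy unfolding flow_balance_def by simp
    also have "\<dots> = (\<Sum>a\<in>UNIV. (1/2) * x i a + (1/2) * y i a)"
      by (simp add: sum.distrib sum_distrib_left)
    finally show "(\<Sum>j\<in>UNIV. (\<Sum>k\<in>UNIV. (1/2) * x k j + (1/2) * y k j) * qm b j i)
        = (\<Sum>a\<in>UNIV. (1/2) * x i a + (1/2) * y i a)" .
  qed
  moreover have "\<forall>i a. 0 \<le> (1/2) * x i a + (1/2) * y i a"
    using assms unfolding cv_feasible_def by (simp add: add_nonneg_nonneg)
  moreover have "\<forall>i. (\<Sum>j\<in>UNIV. (1/2) * x j i + (1/2) * y j i) \<le> bC i"
  proof
    fix i
    have a: "(\<Sum>j\<in>UNIV. x j i) \<le> bC i" "(\<Sum>j\<in>UNIV. y j i) \<le> bC i"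
      using assms unfolding cv_feasible_def by auto
    have "(\<Sum>j\<in>UNIV. (1/2) * x j i + (1/2) * y j i)
       = (1/2) * (\<Sum>j\<in>UNIV. x j i) + (1/2) * (\<Sum>j\<in>UNIV. y j i)"
      by (simp add: sum.distrib sum_distrib_left)
    then show "(\<Sum>j\<in>UNIV. (1/2) * x j i + (1/2) * y j i) \<le> bC i" using a by linarith
  qed
  ultimately show ?thesis unfolding cv_feasible_def by blast
qed

lemma ln_mid_strict:
  fixes a b :: real
  assumes "0 < a" "0 < b" "a \<noteq> b"
  shows "(ln a + ln b) / 2 < ln ((a + b) / 2)"
proof -
  have "0 < (a - b)^2" using assms by simp
  then have "a * b < ((a + b) / 2) * ((a + b) / 2)"
    by (simp add: power2_eq_square algebra_simps)
  then have "ln (a * b) < ln (((a + b) / 2) * ((a + b) / 2))"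
    using assms by (simp add: ln_less_cancel_iff)
  moreover have "ln (a * b) = ln a + ln b" using assms by (simp add: ln_mult)
  moreover have "ln (((a + b) / 2) * ((a + b) / 2)) = 2 * ln ((a + b) / 2)"
    using assms ln_mult[of "(a + b) / 2" "(a + b) / 2"] by simp
  ultimately have "ln a + ln b < 2 * ln ((a + b) / 2)" by simp
  then show ?thesis by simp
qed

lemma unique_vals:
  assumes N: "0 < N"
    and ox: "cv_optimal N p R c b t bC x" and oy: "cv_optimal N p R c b t bC y"
  shows "lin_val (rC p R c b t) x = lin_val (rC p R c b t) y
       \<and> lin_val (tau_dr b t) x = lin_val (tau_dr b t) y"
proof -
  let ?r = "lin_val (rC p R c b t)" and ?m = "lin_val (tau_dr b t)"
  define z where "z = (\<lambda>i a. (1/2) * x i a + (1/2) * y i a)"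
  have fx: "cv_feasible b bC x" and rx: "0 < ?r x"
    and fy: "cv_feasible b bC y" and ry: "0 < ?r y"
    using ox oy unfolding cv_optimal_def by auto
  have fz: "cv_feasible b bC z" unfolding z_def by (rule feasible_mid[OF fx fy])
  have rz: "?r z = (1/2) * ?r x + (1/2) * ?r y" unfolding z_def by (rule lin_val_comb)
  have mz: "?m z = (1/2) * ?m x + (1/2) * ?m y" unfolding z_def by (rule lin_val_comb)
  have rzp: "0 < ?r z" using rz rx ry by simp
  have le1: "cv_obj N p R c b t y \<le> cv_obj N p R c b t x"
    using ox fy ry unfolding cv_optimal_def by blast
  have le2: "cv_obj N p R c b t x \<le> cv_obj N p R c b t y"
    using oy fx rx unfolding cv_optimal_def by blast
  have le3: "cv_obj N p R c b t z \<le> cv_obj N p R c b t x"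
    using ox fz rzp unfolding cv_optimal_def by blast
  have req: "?r x = ?r y"
  proof (rule ccontr)
    assume ne: "?r x \<noteq> ?r y"
    have "(ln (?r x) + ln (?r y)) / 2 < ln ((?r x + ?r y) / 2)"
      by (rule ln_mid_strict[OF rx ry ne])
    also have "(?r x + ?r y) / 2 = ?r z" using rz by simp
    finally have "N * ((ln (?r x) + ln (?r y)) / 2) < N * ln (?r z)"
      using N by simp
    then show False using le1 le2 le3 mz unfolding cv_obj_def by argo
  qed
  moreover have "?m x = ?m y" using le1 le2 unfolding cv_obj_def req by linarith
  ultimately show ?thesis by blast
qed

lemma P_expr:
  assumes "R < 1"
  shows "lin_val (rC2P p R b t) x
     = R / (1 - R) * (lin_val (rC p R c b t) x + c * lin_val (tau_dr b t) x)"
proof -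
  have pt: "rC2P p R b t i a = R / (1 - R) * (rC p R c b t i a + c * tau_dr b t i a)" for i a
    using assms unfolding rC2P_def rC_def by (simp add: field_simps)
  have "lin_val (rC2P p R b t) x = lin_val (\<lambda>i a. R / (1 - R) * (rC p R c b t i a + c * tau_dr b t i a)) x"
    using pt by presburger
  also have "\<dots> = R / (1 - R) * (lin_val (rC p R c b t) x + c * lin_val (tau_dr b t) x)"
    unfolding lin_val_def
    by (simp add: algebra_simps sum.distrib sum_distrib_left)
  finally show ?thesis .
qed

theorem proposition2:
  fixes b t :: "'r::finite \<Rightarrow> 'r \<Rightarrow> real"
    and bC :: "'r \<Rightarrow> real"
    and p c R N :: real
  assumes b_nonneg: "\<forall>i j. 0 \<le> b i j"
    and b_pos: "\<forall>i. 0 < bsum b i"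
    and t_pos: "\<forall>i j. i \<noteq> j \<longrightarrow> 0 < t i j"
    and t_diag: "\<forall>i. t i i = 0"
    and p_pos: "0 < p" and c_nonneg: "0 \<le> c"
    and R_pos: "0 < R" and R_lt1: "R < 1"
    and N_pos: "0 < N"
    and bC_bounds: "\<forall>i. 0 \<le> bC i \<and> bC i \<le> bsum b i"
  shows
    "(\<forall>x y. cv_optimal N p R c b t bC x \<and> cv_optimal N p R c b t bC y \<longrightarrow>
        lin_val (rC2P p R b t) x = lin_val (rC2P p R b t) y)
   \<and> (\<forall>x y. cv_optimal N p R c b t bC x \<and> cv_optimal N p R c b t bC y \<longrightarrow>
        lin_val (tau_dr b t) x = lin_val (tau_dr b t) y)
   \<and> (\<forall>N1 N2 x1 x2. 0 < N1 \<and> N1 \<le> N2 \<and>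
        cv_optimal N1 p R c b t bC x1 \<and> cv_optimal N2 p R c b t bC x2 \<longrightarrow>
        lin_val (rC2P p R b t) x1 \<le> lin_val (rC2P p R b t) x2)
   \<and> (\<forall>x. cv_optimal N p R c b t bC x \<longrightarrow>
        lp_optimal p R c b t bC (lin_val (tau_dr b t) x) x)"
proof (intro conjI allI impI)
  fix x y assume "cv_optimal N p R c b t bC x \<and> cv_optimal N p R c b t bC y"
  then have "lin_val (rC p R c b t) x = lin_val (rC p R c b t) y
       \<and> lin_val (tau_dr b t) x = lin_val (tau_dr b t) y"
    using unique_vals N_pos by blast
  then show "lin_val (rC2P p R b t) x = lin_val (rC2P p R b t) y"
    using P_expr[OF R_lt1, of p b t x c] P_expr[OF R_lt1, of p b t y c] by simp
next
  fix x y assume "cv_optimal N p R c b t bC x \<and> cv_optimal N p R c b t bC y"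
  then show "lin_val (tau_dr b t) x = lin_val (tau_dr b t) y"
    using unique_vals N_pos by blast
next
  fix N1 N2 x1 x2
  assume h: "0 < N1 \<and> N1 \<le> N2 \<and> cv_optimal N1 p R c b t bC x1 \<and> cv_optimal N2 p R c b t bC x2"
  let ?r = "lin_val (rC p R c b t)" and ?m = "lin_val (tau_dr b t)"
  have k: "0 \<le> R / (1 - R)" using R_pos R_lt1 by simp
  have "?r x1 \<le> ?r x2 \<and> ?m x1 \<le> ?m x2"
  proof (cases "N1 = N2")
    case True
    then show ?thesis using unique_vals[of N1 p R c b t bC x1 x2] h by simp
  next
    case False
    then have lt: "N1 < N2" using h by simp
    have f1: "cv_feasible b bC x1" "0 < ?r x1" and f2: "cv_feasible b bC x2" "0 < ?r x2"
      using h unfolding cv_optimal_def by auto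
    have a1: "N1 * ln (?r x2) - ?m x2 \<le> N1 * ln (?r x1) - ?m x1"
      using h f2 unfolding cv_optimal_def cv_obj_def by blast
    have a2: "N2 * ln (?r x1) - ?m x1 \<le> N2 * ln (?r x2) - ?m x2"
      using h f1 unfolding cv_optimal_def cv_obj_def by blast
    have "(N2 - N1) * (ln (?r x2) - ln (?r x1)) \<ge> 0"
      using a1 a2 by (simp add: algebra_simps)
    then have l: "ln (?r x1) \<le> ln (?r x2)" using lt
      by (simp add: zero_le_mult_iff)
    then have "?r x1 \<le> ?r x2" using f1 f2 by simp
    moreover have "N1 * (ln (?r x2) - ln (?r x1)) \<ge> 0" using l h by simp
    then have "?m x1 \<le> ?m x2" using a1 by (simp add: algebra_simps)
    ultimately show ?thesis by simp
  qed
  then have "?r x1 + c * ?m x1 \<le> ?r x2 + c * ?m x2"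
    using c_nonneg by (simp add: add_mono mult_left_mono)
  then show "lin_val (rC2P p R b t) x1 \<le> lin_val (rC2P p R b t) x2"
    using P_expr[OF R_lt1, of p b t x1 c] P_expr[OF R_lt1, of p b t x2 c]
      mult_left_mono[OF _ k] by presburger
next
  fix x assume ox: "cv_optimal N p R c b t bC x"
  let ?r = "lin_val (rC p R c b t)" and ?m = "lin_val (tau_dr b t)"
  have fx: "cv_feasible b bC x" and rx: "0 < ?r x" using ox unfolding cv_optimal_def by auto
  show "lp_optimal p R c b t bC (?m x) x"
    unfolding lp_optimal_def
  proof (intro conjI allI impI fx order_refl)
    fix y assume hy: "cv_feasible b bC y \<and> ?m y \<le> ?m x"
    show "?r y \<le> ?r x"
    proof (rule ccontr)
      assume "\<not> ?r y \<le> ?r x"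
      then have lt: "?r x < ?r y" by simp
      then have ry: "0 < ?r y" using rx by simp
      have "ln (?r x) < ln (?r y)" using lt rx by simp
      then have "N * ln (?r x) < N * ln (?r y)" using N_pos by simp
      moreover have "cv_obj N p R c b t y \<le> cv_obj N p R c b t x"
        using ox hy ry unfolding cv_optimal_def by blast
      ultimately show False using hy unfolding cv_obj_def by linarith
    qed
  qed
qed

end
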